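(* Let $N,M,L,I$ be positive integers, $\sigma^2>0$, $\rho>0$. For $i\in\{1,\dots,I\}$ let $\hat\alpha_i\in\mathbb C$, $\hat{\mathbf G}_i\in\mathbb C^{N\times M}$, $\mathbf a_i\in\mathbb C^N$; for $1\le i<j\le I$ let $\beta_{i,j}\ge0$; and let $\mathbf x\in\mathbb C^M$, $\boldsymbol\theta\in\mathbb C^N$ be fixed. For $i,j\in\{1,\dots,I\}$ define $\mathbf A_{i,j}=(\hat{\mathbf G}_j^{*}\hat{\mathbf G}_i^{T})\odot(\mathbf a_i\mathbf a_j^H)^T$ and $\mathbf B_{i,j}=(\mathbf a_j^{*}\mathbf a_i^T)\odot(\hat{\mathbf G}_i\mathbf x\mathbf x^H\hat{\mathbf G}_j^H)^T$. For $\mathbf Q\in\mathbb C^{N\times N}$ let $$\varphi_{i,j}(\mathbf Q)=\frac{L}{\sigma^2}\Big(|\hat\alpha_i|^2\mathrm{tr}(\mathbf Q^H\mathbf A_{i,i}\mathbf Q\mathbf B_{i,i})-2\Re\{\hat\alpha_i\hat\alpha_j^{*}\mathrm{tr}(\mathbf Q^H\mathbf A_{i,j}\mathbf Q\mathbf B_{i,j})\}+|\hat\alpha_j|^2\mathrm{tr}(\mathbf Q^H\mathbf A_{j,j}\mathbf Q\mathbf B_{j,j})\Big),$$ $$\varpi(\mathbf Q)=\sum_{i=1}^{I}\sum_{j=i+1}^{I}\beta_{i,j}\varphi_{i,j}(\mathbf Q)+\frac{1}{2\rho}\Re\{\boldsymbol\theta^H\mathbf Q\boldsymbol\theta\},$$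 and let $\mathcal M=\{\mathbf Q\in\mathbb C^{N\times N}:|\mathbf Q(m,n)|=1\ \forall m,n\}$. Further define $$\mathbf D_{i,j}(\mathbf Q)=\frac{L}{\sigma^2}\Big(|\hat\alpha_i|^2\mathbf A_{i,i}\mathbf Q\mathbf B_{i,i}-\hat\alpha_i\hat\alpha_j^{*}\mathbf A_{i,j}\mathbf Q\mathbf B_{i,j}-\hat\alpha_i^{*}\hat\alpha_j\mathbf A_{i,j}^H\mathbf Q\mathbf B_{i,j}^H+|\hat\alpha_j|^2\mathbf A_{j,j}\mathbf Q\mathbf B_{j,j}\Big)$$ and, for $m,n\in\{1,\dots,N\}$, $$\chi_{i,j}^{(m,n)}=|\hat\alpha_i|^2\mathbf A_{i,i}(m,m)\mathbf B_{i,i}(n,n)-2\Re\{\hat\alpha_i\hat\alpha_j^{*}\mathbf A_{i,j}(m,m)\mathbf B_{i,j}(n,n)\}+|\hat\alpha_j|^2\mathbf A_{j,j}(m,m)\mathbf B_{j,j}(n,n).$$ Then, when the block coordinate descent method is applied to $\max_{\mathbf Q\in\mathcal M}\varpi(\mathbf Q)$ updating one entry at a time, the entry $(m,n)$ (for any $m,n$, with all other entries of $\mathbf Q\in\mathcal M$ fixed) is updated as $$\mathbf Q(m,n)\leftarrow\exp\Big\{j\arg\Big(\sum_{i<j}\beta_{i,j}[\mathbf D_{i,j}(\mathbf Q)]_{m,n}+\frac{1}{4\rho}[\boldsymbol\theta\boldsymbol\theta^H]_{m,n}-\frac{L}{\sigma^2}\mathbf Q(m,n)\sum_{i<j}\beta_{i,j}\chi_{i,j}^{(m,n)}\Big)\Big\},$$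 i.e. this value maximizes $\varpi$ over all matrices in $\mathcal M$ that coincide with $\mathbf Q$ outside the entry $(m,n)$ (with $\arg 0$ taken arbitrarily).
   Context: $\odot$ is the Hadamard product, $(\cdot)^*$ entrywise conjugate, $(\cdot)^H$ conjugate transpose, $j$ the imaginary unit (also used as an index), $\arg$ the argument of a complex number, $\sum_{i<j}$ denotes $\sum_{i=1}^I\sum_{j=i+1}^I$. $\mathbf D_{i,j}(\mathbf Q)$ is the Wirtinger derivative $\partial\varphi_{i,j}/\partial\mathbf Q^{*}$. *)

theory Defs
  imports "HOL-Analysis.Analysis"
begin

definition mconj :: "complex^'c^'r \<Rightarrow> complex^'c^'r" where
  "mconj A = (\<chi> i j. cnj (A$i$j))"

definition vconj :: "complex^'n \<Rightarrow> complex^'n" where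
  "vconj v = (\<chi> i. cnj (v$i))"

definition adj :: "complex^'c^'r \<Rightarrow> complex^'r^'c" where
  "adj A = transpose (mconj A)"

definition hadamard :: "complex^'c^'r \<Rightarrow> complex^'c^'r \<Rightarrow> complex^'c^'r" where
  "hadamard A B = (\<chi> i j. A$i$j * B$i$j)"

definition mscale :: "complex \<Rightarrow> complex^'c^'r \<Rightarrow> complex^'c^'r" where
  "mscale c A = (\<chi> i j. c * A$i$j)"

definition colrow :: "complex^'r \<Rightarrow> complex^'c \<Rightarrow> complex^'c^'r" where
  "colrow u v = (\<chi> i j. u$i * v$j)"

definition Amat :: "(nat \<Rightarrow> complex^'m^'n) \<Rightarrow> (nat \<Rightarrow> complex^'n) \<Rightarrow> nat \<Rightarrow> nat \<Rightarrow> complex^'n^'n" where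
  "Amat G a i j = hadamard (mconj (G j) ** transpose (G i)) (transpose (colrow (a i) (vconj (a j))))"

definition Bmat :: "(nat \<Rightarrow> complex^'m^'n) \<Rightarrow> (nat \<Rightarrow> complex^'n) \<Rightarrow> complex^'m \<Rightarrow> nat \<Rightarrow> nat \<Rightarrow> complex^'n^'n" where
  "Bmat G a x i j = hadamard (colrow (vconj (a j)) (a i))
      (transpose (G i ** colrow x (vconj x) ** adj (G j)))"

definition qform :: "complex^'n^'n \<Rightarrow> complex^'n^'n \<Rightarrow> complex^'n^'n \<Rightarrow> complex" where
  "qform Q A B = trace (adj Q ** A ** Q ** B)"

text \<open>\<phi>_{i,j}(Q). The traces tr(Q^H A_{i,i} Q B_{i,i}) are real (A_{i,i}, B_{i,i} Hermitian);
  we take their real part so that \<phi> is real-valued.\<close>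
definition phi :: "real \<Rightarrow> real \<Rightarrow> (nat \<Rightarrow> complex) \<Rightarrow> (nat \<Rightarrow> complex^'m^'n) \<Rightarrow> (nat \<Rightarrow> complex^'n)
    \<Rightarrow> complex^'m \<Rightarrow> nat \<Rightarrow> nat \<Rightarrow> complex^'n^'n \<Rightarrow> real" where
  "phi L \<sigma>2 \<alpha> G a x i j Q = L / \<sigma>2 *
     ( (cmod (\<alpha> i))\<^sup>2 * Re (qform Q (Amat G a i i) (Bmat G a x i i))
     - 2 * Re (\<alpha> i * cnj (\<alpha> j) * qform Q (Amat G a i j) (Bmat G a x i j))
     + (cmod (\<alpha> j))\<^sup>2 * Re (qform Q (Amat G a j j) (Bmat G a x j j)))"

definition varpi :: "real \<Rightarrow> real \<Rightarrow> real \<Rightarrow> nat \<Rightarrow> (nat \<Rightarrow> nat \<Rightarrow> real) \<Rightarrow> (nat \<Rightarrow> complex)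
    \<Rightarrow> (nat \<Rightarrow> complex^'m^'n) \<Rightarrow> (nat \<Rightarrow> complex^'n) \<Rightarrow> complex^'m \<Rightarrow> complex^'n
    \<Rightarrow> complex^'n^'n \<Rightarrow> real" where
  "varpi L \<sigma>2 \<rho> I \<beta> \<alpha> G a x \<theta> Q =
     (\<Sum>i\<in>{1..I}. \<Sum>j\<in>{i+1..I}. \<beta> i j * phi L \<sigma>2 \<alpha> G a x i j Q)
     + 1 / (2 * \<rho>) * Re (\<Sum>k\<in>UNIV. cnj (\<theta>$k) * (Q *v \<theta>)$k)"

definition unimod :: "(complex^'n^'n) set" where
  "unimod = {Q. \<forall>r s. cmod (Q$r$s) = 1}"

definition Dmat :: "real \<Rightarrow> real \<Rightarrow> (nat \<Rightarrow> complex) \<Rightarrow> (nat \<Rightarrow> complex^'m^'n) \<Rightarrow> (nat \<Rightarrow> complex^'n)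
    \<Rightarrow> complex^'m \<Rightarrow> nat \<Rightarrow> nat \<Rightarrow> complex^'n^'n \<Rightarrow> complex^'n^'n" where
  "Dmat L \<sigma>2 \<alpha> G a x i j Q = mscale (complex_of_real (L / \<sigma>2))
     ( (mscale (complex_of_real ((cmod (\<alpha> i))\<^sup>2)) (Amat G a i i ** Q ** Bmat G a x i i))
     - (mscale (\<alpha> i * cnj (\<alpha> j)) (Amat G a i j ** Q ** Bmat G a x i j))
     - (mscale (cnj (\<alpha> i) * \<alpha> j) (adj (Amat G a i j) ** Q ** adj (Bmat G a x i j)))
     + (mscale (complex_of_real ((cmod (\<alpha> j))\<^sup>2)) (Amat G a j j ** Q ** Bmat G a x j j)))"

definition chi :: "(nat \<Rightarrow> complex) \<Rightarrow> (nat \<Rightarrow> complex^'m^'n) \<Rightarrow> (nat \<Rightarrow> complex^'n)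
    \<Rightarrow> complex^'m \<Rightarrow> nat \<Rightarrow> nat \<Rightarrow> 'n \<Rightarrow> 'n \<Rightarrow> complex" where
  "chi \<alpha> G a x i j m n =
       complex_of_real ((cmod (\<alpha> i))\<^sup>2) * (Amat G a i i)$m$m * (Bmat G a x i i)$n$n
     - complex_of_real (2 * Re (\<alpha> i * cnj (\<alpha> j) * (Amat G a i j)$m$m * (Bmat G a x i j)$n$n))
     + complex_of_real ((cmod (\<alpha> j))\<^sup>2) * (Amat G a j j)$m$m * (Bmat G a x j j)$n$n"

end

theory Submission
  imports Defs
begin

definition updm :: "complex^'n^'n \<Rightarrow> 'n \<Rightarrow> 'n \<Rightarrow> complex \<Rightarrow> complex^'n^'n" where
  "updm Q m n z = (\<chi> r s. if r = m \<and> s = n then z else Q$r$s)"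
definition Em :: "'n \<Rightarrow> 'n \<Rightarrow> complex^'n^'n" where
  "Em m n = (\<chi> r s. if r = m \<and> s = n then 1 else 0)"

lemma mmult_comp: "(A ** B)$i$j = (\<Sum>k\<in>UNIV. A$i$k * B$k$j)"
  by (simp add: matrix_matrix_mult_def)

lemma adj_comp[simp]: "adj A $ i $ j = cnj (A$j$i)"
  by (simp add: adj_def mconj_def transpose_def)

lemma mscale_comp[simp]: "mscale c A $ i $ j = c * A$i$j"
  by (simp add: mscale_def)

lemma upd_decomp: "updm Q m n z = updm Q m n 0 + mscale z (Em m n)"
  by (simp add: vec_eq_iff updm_def Em_def)

lemma matrix_add_rdistrib: "((B + C) ** A) = (B ** A) + (C ** A)" for A B C :: "complex^'n^'n"
  by (simp add: vec_eq_iff mmult_comp sum.distrib[symmetric] distrib_right)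

lemma adj_add: "adj (X + Y) = adj X + adj Y"
  by (simp add: vec_eq_iff)

lemma adj_mscale: "adj (mscale c X) = mscale (cnj c) (adj X)"
  by (simp add: vec_eq_iff)

lemma mscale_mult_l: "mscale c X ** Y = mscale c (X ** Y)"
  by (simp add: vec_eq_iff mmult_comp sum_distrib_left mult.assoc)

lemma mscale_mult_r: "X ** mscale c Y = mscale c (X ** Y)"
  by (simp add: vec_eq_iff mmult_comp sum_distrib_left algebra_simps)

lemma trace_mscale: "trace (mscale c X) = c * trace X"
  by (simp add: trace_def sum_distrib_left)

lemma adj_mult: "adj (X ** Y) = adj Y ** adj X"
  by (simp add: vec_eq_iff mmult_comp mult.commute)

lemma adj_adj[simp]: "adj (adj X) = X"
  by (simp add: vec_eq_iff)

lemma sum_if_conj[simp]: "(\<Sum>k\<in>UNIV. if k = (m::'n::finite) \<and> P then (c::complex) else 0) = (if P then c else 0)"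
  by (cases P) (auto simp: sum.delta)

lemma trace_adjE: "trace (adj (Em m n) ** M) = M$m$n"
  by (simp add: trace_def mmult_comp Em_def if_distrib if_distribR cong: if_cong)

lemma mid_E: "(M ** Em m n ** N)$i$j = M$i$m * N$n$j"
  by (simp add: mmult_comp Em_def if_distrib if_distribR cong: if_cong)

lemma qform_upd:
  fixes Q A B :: "complex^'n::finite^'n" and m n :: 'n
  defines "Q0 \<equiv> updm Q m n 0"
  shows "qform (updm Q m n z) A B = qform Q0 A B + cnj z * (A ** Q0 ** B)$m$n
     + z * (B ** adj Q0 ** A)$n$m + cnj z * z * (A$m$m * B$n$n)"
proof -
  let ?E = "Em m n :: complex^'n^'n"
  have e: "updm Q m n z = Q0 + mscale z ?E" unfolding Q0_def by (rule upd_decomp)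
  have 1: "trace (adj Q0 ** A ** mscale z ?E ** B) = z * (B ** adj Q0 ** A)$n$m"
  proof -
    have "trace (adj Q0 ** A ** mscale z ?E ** B) = z * trace (adj Q0 ** A ** ?E ** B)"
      by (simp add: mscale_mult_l mscale_mult_r trace_mscale)
    also have "trace (adj Q0 ** A ** ?E ** B) = (\<Sum>p\<in>UNIV. (adj Q0 ** A)$p$m * B$n$p)"
      by (simp add: trace_def mid_E)
    also have "\<dots> = (B ** adj Q0 ** A)$n$m"
      by (simp add: mmult_comp[of B "adj Q0 ** A"] matrix_mul_assoc[symmetric] mult.commute)
    finally show ?thesis .
  qed
  have 2: "trace (mscale (cnj z) (adj ?E) ** A ** Q0 ** B) = cnj z * (A ** Q0 ** B)$m$n"
    by (simp add: mscale_mult_l trace_mscale matrix_mul_assoc[symmetric] trace_adjE)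
  have 3: "trace (mscale (cnj z) (adj ?E) ** A ** mscale z ?E ** B) = cnj z * z * (A$m$m * B$n$n)"
    by (simp add: mscale_mult_l mscale_mult_r trace_mscale matrix_mul_assoc[symmetric] trace_adjE
       flip: matrix_mul_assoc) (simp add: matrix_mul_assoc mid_E)
  show ?thesis
    unfolding qform_def e adj_add adj_mscale matrix_add_rdistrib matrix_add_ldistrib trace_add
    using 1 2 3 by (simp add: algebra_simps)
qed

lemma cnj_W: "cnj ((B ** adj Q0 ** A)$n$m) = (adj A ** Q0 ** adj B)$m$n"
proof -
  have "adj (B ** adj Q0 ** A) = adj A ** (Q0 ** adj B)" by (simp add: adj_mult)
  then have "(adj (B ** adj Q0 ** A))$m$n = (adj A ** Q0 ** adj B)$m$n"
    by (simp add: matrix_mul_assoc)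
  then show ?thesis by simp
qed

lemma re_qform_upd:
  fixes Q A B :: "complex^'n::finite^'n" and m n :: 'n
  defines "Q0 \<equiv> updm Q m n 0"
  shows "Re (g * qform (updm Q m n z) A B) = Re (g * qform Q0 A B)
     + Re (cnj z * (g * (A ** Q0 ** B)$m$n + cnj g * (adj A ** Q0 ** adj B)$m$n))
     + (cmod z)\<^sup>2 * Re (g * (A$m$m * B$n$n))"
proof -
  have zz: "cnj z * z = of_real ((cmod z)\<^sup>2)" using complex_norm_square[of z] by (simp add: mult.commute)
  have "Re (g * (z * (B ** adj Q0 ** A)$n$m)) = Re (cnj (g * (z * (B ** adj Q0 ** A)$n$m)))"
    by (simp add: algebra_simps)
  also have "\<dots> = Re (cnj z * (cnj g * (adj A ** Q0 ** adj B)$m$n))"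
    by (simp add: cnj_W mult_ac)
  finally have w: "Re (g * (z * (B ** adj Q0 ** A)$n$m)) = Re (cnj z * (cnj g * (adj A ** Q0 ** adj B)$m$n))" .
  have "Re (g * qform (updm Q m n z) A B) = Re (g * qform Q0 A B) + Re (g * (cnj z * (A ** Q0 ** B)$m$n))
     + Re (g * (z * (B ** adj Q0 ** A)$n$m)) + Re (g * (cnj z * z * (A$m$m * B$n$n)))"
    unfolding qform_upd[of Q m n z A B, folded Q0_def] by (simp add: distrib_left)
  also have "Re (g * (cnj z * z * (A$m$m * B$n$n))) = (cmod z)\<^sup>2 * Re (g * (A$m$m * B$n$n))"
    unfolding zz by (simp add: algebra_simps)
  finally show ?thesis using w by (simp add: distrib_left mult_ac)
qed

lemma entry_upd:
  fixes Q X Y :: "complex^'n::finite^'n" and m n :: 'n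
  shows "(X ** updm Q m n z ** Y)$m$n = (X ** updm Q m n 0 ** Y)$m$n + X$m$m * z * Y$n$n"
proof -
  have "X ** updm Q m n z ** Y = X ** updm Q m n 0 ** Y + mscale z (X ** Em m n ** Y)"
    by (subst upd_decomp) (simp add: matrix_add_ldistrib matrix_add_rdistrib mscale_mult_l mscale_mult_r)
  then show ?thesis by (simp add: mid_E mult_ac)
qed

lemma updm_self: "updm Q m n (Q$m$n) = Q"
  by (simp add: vec_eq_iff updm_def)

lemma herm_A: "adj (Amat G a i i) = Amat G a i i"
  by (simp add: vec_eq_iff Amat_def hadamard_def mconj_def transpose_def colrow_def vconj_def
       mmult_comp mult.commute)

lemma herm_M: "adj (H ** colrow x (vconj x) ** adj H) = H ** colrow x (vconj x) ** adj H"
proof -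
  have c: "adj (colrow x (vconj x)) = colrow x (vconj x)"
    by (simp add: vec_eq_iff colrow_def vconj_def mult.commute)
  show ?thesis by (simp add: adj_mult c matrix_mul_assoc)
qed

lemma herm_B: "adj (Bmat G a x i i) = Bmat G a x i i"
proof -
  let ?M = "G i ** colrow x (vconj x) ** adj (G i)"
  have "cnj (?M$r$s) = ?M$s$r" for r s
    using arg_cong[OF herm_M[of "G i" x], of "\<lambda>X. X$s$r"] by simp
  then show ?thesis
    by (simp add: vec_eq_iff Bmat_def hadamard_def transpose_def colrow_def vconj_def mult.commute)
qed

lemma Re_lin: "Re (w * (complex_of_real r * u)) = r * Re (w * u)"
  by (simp add: algebra_simps)

lemma phi_upd:
  fixes Q :: "complex^'n::finite^'n" and m n :: 'n
  defines "Q0 \<equiv> updm Q m n 0"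
  shows "\<exists>k. \<forall>z. phi L s \<alpha> G a x i j (updm Q m n z) = phi L s \<alpha> G a x i j Q0
     + Re (cnj z * (2 * ((Dmat L s \<alpha> G a x i j Q)$m$n - of_real (L/s) * Q$m$n * chi \<alpha> G a x i j m n)))
     + (cmod z)\<^sup>2 * k"
proof -
  define A1 where "A1 = Amat G a i i"
  define A2 where "A2 = Amat G a i j"
  define A3 where "A3 = Amat G a j j"
  define B1 where "B1 = Bmat G a x i i"
  define B2 where "B2 = Bmat G a x i j"
  define B3 where "B3 = Bmat G a x j j"
  define U1 where "U1 = (A1 ** Q0 ** B1)$m$n"
  define U2 where "U2 = (A2 ** Q0 ** B2)$m$n"
  define V2 where "V2 = (adj A2 ** Q0 ** adj B2)$m$n"
  define U3 where "U3 = (A3 ** Q0 ** B3)$m$n"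
  define g where "g = \<alpha> i * cnj (\<alpha> j)"
  define q where "q = Q$m$n"
  define ai where "ai = (cmod (\<alpha> i))\<^sup>2"
  define aj where "aj = (cmod (\<alpha> j))\<^sup>2"
  have hA1: "adj A1 = A1" unfolding A1_def by (rule herm_A)
  have hA3: "adj A3 = A3" unfolding A3_def by (rule herm_A)
  have hB1: "adj B1 = B1" unfolding B1_def by (rule herm_B)
  have hB3: "adj B3 = B3" unfolding B3_def by (rule herm_B)
  have r1: "Re (qform (updm Q m n z) A1 B1) = Re (qform Q0 A1 B1) + Re (cnj z * (2 * U1))
       + (cmod z)\<^sup>2 * Re (A1$m$m * B1$n$n)" for z
    using re_qform_upd[of 1 Q m n z A1 B1] unfolding hA1 hB1 Q0_def U1_def by (simp add: algebra_simps)
  have r3: "Re (qform (updm Q m n z) A3 B3) = Re (qform Q0 A3 B3) + Re (cnj z * (2 * U3))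
       + (cmod z)\<^sup>2 * Re (A3$m$m * B3$n$n)" for z
    using re_qform_upd[of 1 Q m n z A3 B3] unfolding hA3 hB3 Q0_def U3_def by (simp add: algebra_simps)
  have r2: "Re (g * qform (updm Q m n z) A2 B2) = Re (g * qform Q0 A2 B2) + Re (cnj z * (g * U2 + cnj g * V2))
       + (cmod z)\<^sup>2 * Re (g * (A2$m$m * B2$n$n))" for z
    using re_qform_upd[of g Q m n z A2 B2] unfolding Q0_def U2_def V2_def by simp
  have e: "(X ** Q ** Y)$m$n = (X ** Q0 ** Y)$m$n + X$m$m * q * Y$n$n" for X Y
    using entry_upd[of X Q m n q Y] unfolding updm_self q_def Q0_def .
  have D: "(Dmat L s \<alpha> G a x i j Q)$m$n = of_real (L/s) * (of_real ai * (U1 + A1$m$m*q*B1$n$n)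
      - g * (U2 + A2$m$m*q*B2$n$n) - cnj g * (V2 + cnj (A2$m$m)*q*cnj (B2$n$n))
      + of_real aj * (U3 + A3$m$m*q*B3$n$n))"
    unfolding Dmat_def by (simp add: e A1_def A2_def A3_def B1_def B2_def B3_def U1_def U2_def V2_def U3_def g_def ai_def aj_def)
  have C: "chi \<alpha> G a x i j m n = of_real ai * A1$m$m * B1$n$n - (g * A2$m$m * B2$n$n + cnj (g * A2$m$m * B2$n$n))
      + of_real aj * A3$m$m * B3$n$n"
    unfolding chi_def complex_add_cnj by (simp add: A1_def A2_def A3_def B1_def B2_def B3_def g_def ai_def aj_def mult.assoc)
  have P: "2 * ((Dmat L s \<alpha> G a x i j Q)$m$n - of_real (L/s) * Q$m$n * chi \<alpha> G a x i j m n)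
      = of_real (L/s) * (of_real ai * (2 * U1) - 2 * (g * U2 + cnj g * V2) + of_real aj * (2 * U3))"
    unfolding D C q_def[symmetric] by (simp add: algebra_simps)
  have ph: "phi L s \<alpha> G a x i j Y = L / s * (ai * Re (qform Y A1 B1) - 2 * Re (g * qform Y A2 B2) + aj * Re (qform Y A3 B3))" for Y
    by (simp add: phi_def A1_def A2_def A3_def B1_def B2_def B3_def g_def ai_def aj_def)
  have "Re (cnj z * (of_real (L/s) * (of_real ai * (2 * U1) - 2 * (g * U2 + cnj g * V2) + of_real aj * (2 * U3))))
     = L / s * (ai * Re (cnj z * (2 * U1)) - 2 * Re (cnj z * (g * U2 + cnj g * V2)) + aj * Re (cnj z * (2 * U3)))" for z
    by (simp only: Re_lin distrib_left right_diff_distrib plus_complex.sel minus_complex.sel)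
      (simp add: algebra_simps)
  then show ?thesis unfolding P ph r1 r2 r3
    by (intro exI[of _ "L / s * (ai * Re (A1$m$m * B1$n$n) - 2 * Re (g * (A2$m$m * B2$n$n)) + aj * Re (A3$m$m * B3$n$n))"] allI)
      (simp add: algebra_simps)
qed

lemma theta_upd:
  fixes Q :: "complex^'n::finite^'n" and m n :: 'n and \<theta> :: "complex^'n"
  shows "Re (\<Sum>k\<in>UNIV. cnj (\<theta>$k) * (updm Q m n z *v \<theta>)$k)
     = Re (\<Sum>k\<in>UNIV. cnj (\<theta>$k) * (updm Q m n 0 *v \<theta>)$k) + Re (cnj z * (colrow \<theta> (vconj \<theta>))$m$n)"
proof -
  have v: "(updm Q m n z *v \<theta>)$k = (updm Q m n 0 *v \<theta>)$k + (if k = m then z * \<theta>$n else 0)" for k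
  proof -
    have "(updm Q m n z *v \<theta>)$k = (\<Sum>l\<in>UNIV. updm Q m n 0 $k$l * \<theta>$l + (if k = m \<and> l = n then z * \<theta>$n else 0))"
      unfolding matrix_vector_mult_def updm_def by (auto intro!: sum.cong)
    also have "\<dots> = (updm Q m n 0 *v \<theta>)$k + (if k = m then z * \<theta>$n else 0)"
      by (simp only: sum.distrib) (cases "k = m"; simp add: matrix_vector_mult_def)
    finally show ?thesis .
  qed
  have "(\<Sum>k\<in>UNIV. cnj (\<theta>$k) * (updm Q m n z *v \<theta>)$k)
      = (\<Sum>k\<in>UNIV. cnj (\<theta>$k) * (updm Q m n 0 *v \<theta>)$k) + cnj (\<theta>$m) * (z * \<theta>$n)"
  proof -
    have "cnj (\<theta>$k) * (updm Q m n z *v \<theta>)$k = cnj (\<theta>$k) * (updm Q m n 0 *v \<theta>)$k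
         + (if k = m then cnj (\<theta>$m) * (z * \<theta>$n) else 0)" for k
      by (simp add: v distrib_left)
    then show ?thesis by (simp add: sum.distrib sum.delta)
  qed
  moreover have "Re (cnj (\<theta>$m) * (z * \<theta>$n)) = Re (cnj z * (colrow \<theta> (vconj \<theta>))$m$n)"
    by (simp add: colrow_def vconj_def algebra_simps)
  ultimately show ?thesis by simp
qed

lemma varpi_upd:
  fixes Q :: "complex^'n::finite^'n" and m n :: 'n and \<theta> :: "complex^'n"
    and L s \<rho> :: real and I :: nat and \<beta> :: "nat \<Rightarrow> nat \<Rightarrow> real" and \<alpha> :: "nat \<Rightarrow> complex"
    and G :: "nat \<Rightarrow> complex^'m::finite^'n" and a :: "nat \<Rightarrow> complex^'n" and x :: "complex^'m"
  defines "c \<equiv> (\<Sum>i\<in>{1..I}. \<Sum>j\<in>{i+1..I}. complex_of_real (\<beta> i j) * (Dmat L s \<alpha> G a x i j Q)$m$n)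
                 + complex_of_real (1 / (4 * \<rho>)) * (colrow \<theta> (vconj \<theta>))$m$n
                 - complex_of_real (L / s) * Q$m$n
                     * (\<Sum>i\<in>{1..I}. \<Sum>j\<in>{i+1..I}. complex_of_real (\<beta> i j) * chi \<alpha> G a x i j m n)"
  shows "\<exists>K k. \<forall>z. varpi L s \<rho> I \<beta> \<alpha> G a x \<theta> (updm Q m n z) = K + Re (cnj z * (2 * c)) + (cmod z)\<^sup>2 * k"
proof -
  define Q0 where "Q0 = updm Q m n 0"
  define P where "P i j = 2 * ((Dmat L s \<alpha> G a x i j Q)$m$n - of_real (L/s) * Q$m$n * chi \<alpha> G a x i j m n)" for i j
  define T where "T = (colrow \<theta> (vconj \<theta>))$m$n"
  have "\<forall>i j. \<exists>k. \<forall>z. phi L s \<alpha> G a x i j (updm Q m n z) = phi L s \<alpha> G a x i j Q0 + Re (cnj z * P i j) + (cmod z)\<^sup>2 * k"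
    using phi_upd unfolding P_def Q0_def by blast
  then obtain kf where kf: "\<And>i j z. phi L s \<alpha> G a x i j (updm Q m n z) = phi L s \<alpha> G a x i j Q0 + Re (cnj z * P i j) + (cmod z)\<^sup>2 * kf i j"
    by metis
  have c2: "2 * c = (\<Sum>i\<in>{1..I}. \<Sum>j\<in>{i+1..I}. complex_of_real (\<beta> i j) * P i j) + complex_of_real (1 / (2 * \<rho>)) * T"
  proof -
    let ?k = "2 * of_real (L/s) * Q$m$n"
    have pw: "complex_of_real (\<beta> i j) * P i j = 2 * (complex_of_real (\<beta> i j) * (Dmat L s \<alpha> G a x i j Q)$m$n)
       - ?k * (complex_of_real (\<beta> i j) * chi \<alpha> G a x i j m n)" for i j
      unfolding P_def by (simp add: algebra_simps)
    have "(\<Sum>i\<in>{1..I}. \<Sum>j\<in>{i+1..I}. complex_of_real (\<beta> i j) * P i j)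
       = 2 * (\<Sum>i\<in>{1..I}. \<Sum>j\<in>{i+1..I}. complex_of_real (\<beta> i j) * (Dmat L s \<alpha> G a x i j Q)$m$n)
         - ?k * (\<Sum>i\<in>{1..I}. \<Sum>j\<in>{i+1..I}. complex_of_real (\<beta> i j) * chi \<alpha> G a x i j m n)"
      unfolding pw sum_subtractf sum_distrib_left ..
    then show ?thesis unfolding c_def T_def by (simp add: algebra_simps)
  qed
  have th: "Re (\<Sum>k\<in>UNIV. cnj (\<theta>$k) * (updm Q m n z *v \<theta>)$k)
     = Re (\<Sum>k\<in>UNIV. cnj (\<theta>$k) * (Q0 *v \<theta>)$k) + Re (cnj z * T)" for z
    unfolding Q0_def T_def by (rule theta_upd)
  have lin: "Re (cnj z * (2 * c)) = (\<Sum>i\<in>{1..I}. \<Sum>j\<in>{i+1..I}. \<beta> i j * Re (cnj z * P i j)) + 1 / (2 * \<rho>) * Re (cnj z * T)" for z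
    unfolding c2 by (simp only: distrib_left sum_distrib_left Re_sum Re_lin plus_complex.sel)
  show ?thesis
    apply (rule exI[of _ "(\<Sum>i\<in>{1..I}. \<Sum>j\<in>{i+1..I}. \<beta> i j * phi L s \<alpha> G a x i j Q0) + 1 / (2 * \<rho>) * Re (\<Sum>k\<in>UNIV. cnj (\<theta>$k) * (Q0 *v \<theta>)$k)"])
    apply (rule exI[of _ "\<Sum>i\<in>{1..I}. \<Sum>j\<in>{i+1..I}. \<beta> i j * kf i j"])
    apply (rule allI)
    unfolding varpi_def kf th lin
    by (simp add: distrib_left sum.distrib sum_distrib_left algebra_simps)
qed

theorem proposition4:
  fixes L I :: nat and \<sigma>2 \<rho> :: real
    and \<alpha> :: "nat \<Rightarrow> complex" and G :: "nat \<Rightarrow> complex^'m::finite^'n::finite"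
    and a :: "nat \<Rightarrow> complex^'n" and \<beta> :: "nat \<Rightarrow> nat \<Rightarrow> real"
    and x :: "complex^'m" and \<theta> :: "complex^'n"
    and Q :: "complex^'n^'n" and m n :: 'n and t :: real
  assumes "L > 0" and "I > 0" and "\<sigma>2 > 0" and "\<rho> > 0"
    and "\<And>i j. 1 \<le> i \<Longrightarrow> i < j \<Longrightarrow> j \<le> I \<Longrightarrow> \<beta> i j \<ge> 0"
    and "Q \<in> unimod"
  shows "let c = (\<Sum>i\<in>{1..I}. \<Sum>j\<in>{i+1..I}. complex_of_real (\<beta> i j) * (Dmat (real L) \<sigma>2 \<alpha> G a x i j Q)$m$n)
                 + complex_of_real (1 / (4 * \<rho>)) * (colrow \<theta> (vconj \<theta>))$m$n
                 - complex_of_real (real L / \<sigma>2) * Q$m$n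
                     * (\<Sum>i\<in>{1..I}. \<Sum>j\<in>{i+1..I}. complex_of_real (\<beta> i j) * chi \<alpha> G a x i j m n);
             q = exp (\<i> * complex_of_real (if c = 0 then t else Arg c));
             Q1 = (\<chi> r s. if r = m \<and> s = n then q else Q$r$s)
         in Q1 \<in> unimod \<and>
            (\<forall>Q'\<in>unimod. (\<forall>r s. (r, s) \<noteq> (m, n) \<longrightarrow> Q'$r$s = Q$r$s) \<longrightarrow>
               varpi (real L) \<sigma>2 \<rho> I \<beta> \<alpha> G a x \<theta> Q' \<le> varpi (real L) \<sigma>2 \<rho> I \<beta> \<alpha> G a x \<theta> Q1)"
proof -
  define c where "c = (\<Sum>i\<in>{1..I}. \<Sum>j\<in>{i+1..I}. complex_of_real (\<beta> i j) * (Dmat (real L) \<sigma>2 \<alpha> G a x i j Q)$m$n)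
                 + complex_of_real (1 / (4 * \<rho>)) * (colrow \<theta> (vconj \<theta>))$m$n
                 - complex_of_real (real L / \<sigma>2) * Q$m$n
                     * (\<Sum>i\<in>{1..I}. \<Sum>j\<in>{i+1..I}. complex_of_real (\<beta> i j) * chi \<alpha> G a x i j m n)"
  define q where "q = exp (\<i> * complex_of_real (if c = 0 then t else Arg c))"
  have Q1eq: "(\<chi> r s. if r = m \<and> s = n then q else Q$r$s) = updm Q m n q" by (simp add: updm_def)
  have ex: "\<exists>K k. \<forall>z. varpi (real L) \<sigma>2 \<rho> I \<beta> \<alpha> G a x \<theta> (updm Q m n z) = K + Re (cnj z * (2 * c)) + (cmod z)\<^sup>2 * k"
    unfolding c_def by (rule varpi_upd)
  then obtain K k where Kk: "\<And>z. varpi (real L) \<sigma>2 \<rho> I \<beta> \<alpha> G a x \<theta> (updm Q m n z) = K + Re (cnj z * (2 * c)) + (cmod z)\<^sup>2 * k"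
    by blast
  have q1: "cmod q = 1" unfolding q_def by (rule norm_exp_i_times)
  have uq: "updm Q m n q \<in> unimod"
    using assms(6) q1 by (simp add: unimod_def updm_def)
  have qmax: "Re (cnj z * (2 * c)) \<le> Re (cnj q * (2 * c))" if "cmod z = 1" for z
  proof (cases "c = 0")
    case True then show ?thesis by simp
  next
    case False
    have ce: "c = of_real (cmod c) * exp (\<i> * of_real (Arg c))" using Arg_eq[OF False] by simp
    have cq: "cnj q = exp (- (\<i> * of_real (Arg c)))" using False unfolding q_def by (simp add: exp_cnj)
    have "cnj q * c = of_real (cmod c) * (exp (\<i> * of_real (Arg c)) * exp (- (\<i> * of_real (Arg c))))"
      unfolding cq by (subst ce) (simp only: mult_ac)
    also have "\<dots> = of_real (cmod c)"
      by (simp only: exp_minus_inverse mult_1_right)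
    finally have cc: "cnj q * c = of_real (cmod c)" .
    have e2: "cnj q * (2 * c) = 2 * of_real (cmod c)" by (simp only: mult.left_commute[of "cnj q" 2 c] cc)
    then have "Re (cnj q * (2 * c)) = 2 * cmod c" unfolding e2 by simp
    moreover have "Re (cnj z * (2 * c)) \<le> cmod (cnj z * (2 * c))" by (rule complex_Re_le_cmod)
    moreover have "cmod (cnj z * (2 * c)) = 2 * cmod c" using that by (simp add: norm_mult)
    ultimately show ?thesis by simp
  qed
  have main: "\<forall>Q'\<in>unimod. (\<forall>r s. (r, s) \<noteq> (m, n) \<longrightarrow> Q'$r$s = Q$r$s) \<longrightarrow>
               varpi (real L) \<sigma>2 \<rho> I \<beta> \<alpha> G a x \<theta> Q' \<le> varpi (real L) \<sigma>2 \<rho> I \<beta> \<alpha> G a x \<theta> (updm Q m n q)"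
  proof (intro ballI impI)
    fix Q' :: "complex^'n^'n"
    assume u: "Q' \<in> unimod" and o: "\<forall>r s. (r, s) \<noteq> (m, n) \<longrightarrow> Q'$r$s = Q$r$s"
    have e: "Q' = updm Q m n (Q'$m$n)" using o by (auto simp: vec_eq_iff updm_def)
    have "cmod (Q'$m$n) = 1" using u by (simp add: unimod_def)
    then show "varpi (real L) \<sigma>2 \<rho> I \<beta> \<alpha> G a x \<theta> Q' \<le> varpi (real L) \<sigma>2 \<rho> I \<beta> \<alpha> G a x \<theta> (updm Q m n q)"
      using qmax[of "Q'$m$n"] q1 by (subst e) (simp add: Kk)
  qed
  show ?thesis
    unfolding Let_def c_def[symmetric] q_def[symmetric] Q1eq using uq main by blast
qed

end
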